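(* Let $M,K\in\mathbb{N}$ with $M,K>2$ and $|M-K|>2$. If $\{(M+1,0),(M,0),(0,K+1),(0,K)\}\subset\mathcal{Z}_0$, then $S_\infty=\mathbb{L}^2$.
   Context: $\mathbb{L}^2=\{w\in L^2([0,2\pi]^2_{\mathrm{per}};\mathbb{R}):\int w\,dx=0\}$. $\mathbb{Z}^2_+=\{(j_1,j_2)\in\mathbb{Z}^2:j_2>0\}\cup\{(j_1,0):j_1>0\}$, $\mathbb{Z}^2_-=-\mathbb{Z}^2_+$, $\mathbb{Z}^2_0=\mathbb{Z}^2_+\cup\mathbb{Z}^2_-$; $e_k(x)=\sin(k\cdot x)$ for $k\in\mathbb{Z}^2_+$, $e_k(x)=\cos(k\cdot x)$ for $k\in\mathbb{Z}^2_-$. Given a finite set $\mathcal{Z}_*\subset\mathbb{Z}^2_0$, define $\mathcal{Z}_0=\mathcal{Z}_*\cap(-\mathcal{Z}_* )$, for $n\ge1$ $\mathcal{Z}_n=\{\ell+j\in\mathbb{Z}^2_0: j\in\mathcal{Z}_0,\ \ell\in\mathcal{Z}_{n-1},\ \ell^\perp\cdot j\neq0,\ |j|\neq|\ell|\}$ where $\ell^\perp=(-\ell_2,\ell_1)$ and $|\cdot|$ is the Euclidean norm, $\mathcal{Z}_\infty=\bigcup_{n\ge1}\mathcal{Z}_n$, and $S_\infty$ the closed linear span in $\mathbb{L}^2$ of $\{e_k:k\in\mathcal{Z}_\infty\cup\mathcal{Z}_*\}$. *)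

theory Defs
  imports "HOL-Analysis.Analysis"
begin

text \<open>Lattice points are pairs of integers; points of the torus are pairs of reals
  in the fundamental domain [0,2pi]^2.\<close>

definition Zplus :: "(int \<times> int) set" where
  "Zplus = {(j1, j2). j2 > 0} \<union> {(j1, j2). j2 = 0 \<and> j1 > 0}"

definition Zminus :: "(int \<times> int) set" where
  "Zminus = uminus ` Zplus"

definition Zzero :: "(int \<times> int) set" where
  "Zzero = Zplus \<union> Zminus"

definition kdot :: "int \<times> int \<Rightarrow> real \<times> real \<Rightarrow> real" where
  "kdot k x = real_of_int (fst k) * fst x + real_of_int (snd k) * snd x"

definition ebasis :: "int \<times> int \<Rightarrow> real \<times> real \<Rightarrow> real" where
  "ebasis k x = (if k \<in> Zplus then sin (kdot k x) else cos (kdot k x))"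

text \<open>perp l . j where perp l = (-l2, l1)\<close>
definition perpdot :: "int \<times> int \<Rightarrow> int \<times> int \<Rightarrow> int" where
  "perpdot l j = - snd l * fst j + fst l * snd j"

text \<open>squared Euclidean norm (|j| \<noteq> |l| iff squared norms differ)\<close>
definition nsq :: "int \<times> int \<Rightarrow> int" where
  "nsq j = fst j ^ 2 + snd j ^ 2"

fun Zset :: "(int \<times> int) set \<Rightarrow> nat \<Rightarrow> (int \<times> int) set" where
  "Zset Zs 0 = Zs \<inter> uminus ` Zs"
| "Zset Zs (Suc n) = {l + j | l j. j \<in> Zset Zs 0 \<and> l \<in> Zset Zs n \<and>
      perpdot l j \<noteq> 0 \<and> nsq j \<noteq> nsq l \<and> l + j \<in> Zzero}"

definition Zinf :: "(int \<times> int) set \<Rightarrow> (int \<times> int) set" where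
  "Zinf Zs = (\<Union>n\<in>{1..}. Zset Zs n)"

definition Tbox :: "(real \<times> real) set" where
  "Tbox = {0..2*pi} \<times> {0..2*pi}"

text \<open>The space L^2 (mean zero, real valued) on the torus, as a set of representatives.\<close>
definition L2 :: "(real \<times> real \<Rightarrow> real) \<Rightarrow> bool" where
  "L2 f \<longleftrightarrow> f \<in> borel_measurable (lebesgue_on Tbox)
      \<and> integrable (lebesgue_on Tbox) (\<lambda>x. (f x)^2)
      \<and> integral\<^sup>L (lebesgue_on Tbox) f = 0"

definition closed_span :: "(int \<times> int) set \<Rightarrow> (real \<times> real \<Rightarrow> real) \<Rightarrow> bool" where
  "closed_span A f \<longleftrightarrow> L2 f \<and> (\<forall>\<epsilon>>0. \<exists>F c. finite F \<and> F \<subseteq> A \<and>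
      integral\<^sup>L (lebesgue_on Tbox) (\<lambda>x. (f x - (\<Sum>k\<in>F. c k * ebasis k x))^2) < \<epsilon>)"

definition S_inf :: "(int \<times> int) set \<Rightarrow> (real \<times> real \<Rightarrow> real) set" where
  "S_inf Zs = {f. closed_span (Zinf Zs \<union> Zs) f}"

end

theory Submission
  imports Defs
begin


lemma Zzero_iff: "p \<in> Zzero \<longleftrightarrow> p \<noteq> 0"
proof (cases p)
  case (Pair a b)
  show ?thesis
  proof -
    have img: "q \<in> uminus ` A \<longleftrightarrow> - q \<in> A" for q :: "int \<times> int" and A
      by (metis image_iff minus_minus)
    show ?thesis
      unfolding Zzero_def Zminus_def Pair
      by (auto simp: img Zplus_def zero_prod_def)
  qed
qed

lemma row_lemma:
  fixes Q :: "int \<Rightarrow> bool" and m c :: int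
  assumes m: "m > 0" and c: "c > 0"
    and hm: "\<And>x. Q x \<Longrightarrow> x^2 + c \<noteq> m^2 \<Longrightarrow> Q (x + m) \<and> Q (x - m)"
    and hm1: "\<And>x. Q x \<Longrightarrow> x^2 + c \<noteq> (m+1)^2 \<Longrightarrow> Q (x + (m+1)) \<and> Q (x - (m+1))"
    and x0: "Q x0"
  shows "Q x"
proof -
  have up: "\<exists>x'. Q x' \<and> x' \<ge> x + m" if "Q x" for x
  proof (cases "x^2 + c = m^2")
    case True
    then have "x^2 + c \<noteq> (m+1)^2" using m by (simp add: power2_eq_square algebra_simps)
    then show ?thesis using hm1[OF that] by (intro exI[of _ "x + (m+1)"]) auto
  next
    case False
    then show ?thesis using hm[OF that] by (intro exI[of _ "x + m"]) auto
  qed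
  have iter: "\<exists>x'. Q x' \<and> x' \<ge> x0 + int n * m" for n :: nat
  proof (induction n)
    case 0 then show ?case using x0 by auto
  next
    case (Suc n)
    then obtain x' where "Q x'" "x' \<ge> x0 + int n * m" by auto
    then obtain x'' where "Q x''" "x'' \<ge> x' + m" using up by blast
    then show ?case using \<open>x' \<ge> _\<close> by (intro exI[of _ x'']) (auto simp: algebra_simps)
  qed
  define n where "n = nat (m + 1 + \<bar>x0\<bar>)"
  obtain x1 where x1: "Q x1" "x1 \<ge> x0 + int n * m" using iter by blast
  have "int n * m \<ge> int n" using m by (simp add: mult_le_cancel_left1)
  moreover have "int n = m + 1 + \<bar>x0\<bar>" using m by (simp add: n_def)
  ultimately have x1b: "x1 \<ge> m + 1" using x1(2) by linarith
  have stp: "Q (y + 1)" if "Q y" "y \<ge> m + 1" for y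
  proof -
    have "y^2 \<ge> (m+1)^2" using that m by (intro power_mono) auto
    then have "y^2 + c \<noteq> (m+1)^2" using c by auto
    then have "Q (y + (m+1))" using hm1[OF that(1)] by auto
    moreover have "(y + (m+1))^2 + c \<noteq> m^2"
    proof -
      have "(y + (m+1))^2 \<ge> m^2" using that m by (intro power_mono) auto
      then show ?thesis using c by auto
    qed
    ultimately have "Q (y + (m+1) - m)" using hm by blast
    then show ?thesis by (simp add: algebra_simps)
  qed
  have above: "\<forall>y. y \<ge> x1 \<longrightarrow> Q y"
  proof (intro allI impI)
    fix y assume "y \<ge> x1"
    then show "Q y"
    proof (induction y rule: int_ge_induct)
      case base then show ?case using x1 by auto
    next
      case (step i) then show ?case using x1b stp by auto
    qed
  qed
  have down: "Q y" if "Q (y + m)" "Q (y + (m+1))" for y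
  proof (cases "(y+m)^2 + c = m^2")
    case True
    have "(y + (m+1))^2 + c \<noteq> (m+1)^2"
    proof
      assume "(y + (m+1))^2 + c = (m+1)^2"
      with True have "2*(y+m) + 1 = 2*m + 1" by (simp add: power2_eq_square algebra_simps)
      then have "y = 0" by auto
      with True c show False by auto
    qed
    then have "Q (y + (m+1) - (m+1))" using hm1[OF that(2)] by blast
    then show ?thesis by simp
  next
    case False
    then have "Q (y + m - m)" using hm[OF that(1)] by blast
    then show ?thesis by simp
  qed
  have all: "\<forall>y. y \<ge> x1 - int k \<longrightarrow> Q y" for k :: nat
  proof (induction k)
    case 0 then show ?case using above by simp
  next
    case (Suc k)
    show ?case
    proof (intro allI impI)
      fix y assume "y \<ge> x1 - int (Suc k)"
      then have "y + m \<ge> x1 - int k" "y + (m+1) \<ge> x1 - int k" using m by auto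
      then show "Q y" using Suc down by blast
    qed
  qed
  show "Q x" using all[of "nat (x1 - x)"] by auto
qed

lemma Z0_neg: "j \<in> Zset Zs 0 \<Longrightarrow> - j \<in> Zset Zs 0"
  by (auto simp: image_iff)

lemma Zinf_step:
  assumes "l \<in> Zinf Zs" "j \<in> Zset Zs 0" "perpdot l j \<noteq> 0" "nsq j \<noteq> nsq l" "l + j \<noteq> 0"
  shows "l + j \<in> Zinf Zs"
proof -
  obtain n where n: "n \<ge> 1" "l \<in> Zset Zs n" using assms(1) unfolding Zinf_def by auto
  have "l + j \<in> Zset Zs (Suc n)"
    apply (simp only: Zset.simps(2))
    apply (rule CollectI)
    apply (rule exI[of _ l], rule exI[of _ j])
    using assms n by (simp add: Zzero_iff)
  then show ?thesis unfolding Zinf_def by (intro UN_I[of "Suc n"]) auto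
qed

lemma all_in_Zinf:
  fixes M K :: int
  assumes M: "M > 0" and K: "K > 0" and MK: "M \<noteq> K"
    and Z: "{(M + 1, 0), (M, 0), (0, K + 1), (0, K)} \<subseteq> Zset Zs 0"
    and p: "p \<noteq> 0"
  shows "p \<in> Zinf Zs"
proof -
  let ?R = "Zinf Zs"
  have hmove: "(x + a, y) \<in> ?R \<and> (x - a, y) \<in> ?R"
    if "(x, y) \<in> ?R" "y \<noteq> 0" "x^2 + y^2 \<noteq> a^2" "(a, 0) \<in> Zset Zs 0" "a > 0" for x y a :: int
  proof
    have "(x, y) + (a, 0) \<in> ?R"
      using that by (intro Zinf_step) (simp_all add: perpdot_def nsq_def zero_prod_def)
    then show "(x + a, y) \<in> ?R" by simp
    have "(-a, 0) \<in> Zset Zs 0" using Z0_neg[OF that(4)] by simp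
    then have "(x, y) + (-a, 0) \<in> ?R"
      using that by (intro Zinf_step) (simp_all add: perpdot_def nsq_def zero_prod_def)
    then show "(x - a, y) \<in> ?R" by simp
  qed
  have vmove: "(x, y + a) \<in> ?R \<and> (x, y - a) \<in> ?R"
    if "(x, y) \<in> ?R" "x \<noteq> 0" "y^2 + x^2 \<noteq> a^2" "(0, a) \<in> Zset Zs 0" "a > 0" for x y a :: int
  proof
    have "(x, y) + (0, a) \<in> ?R"
      using that by (intro Zinf_step) (simp_all add: perpdot_def nsq_def zero_prod_def add.commute)
    then show "(x, y + a) \<in> ?R" by simp
    have "(0, -a) \<in> Zset Zs 0" using Z0_neg[OF that(4)] by simp
    then have "(x, y) + (0, -a) \<in> ?R"
      using that by (intro Zinf_step) (simp_all add: perpdot_def nsq_def zero_prod_def add.commute)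
    then show "(x, y - a) \<in> ?R" by simp
  qed
  have ZM: "(M, 0) \<in> Zset Zs 0" "(M+1, 0) \<in> Zset Zs 0" "(0, K) \<in> Zset Zs 0" "(0, K+1) \<in> Zset Zs 0"
    using Z by auto
  have row: "(x, y) \<in> ?R" if y0: "y \<noteq> 0" and x0: "(x0, y) \<in> ?R" for x y x0
  proof (rule row_lemma[where Q = "\<lambda>x. (x, y) \<in> ?R" and m = M and c = "y^2"])
    show "M > 0" by (rule M)
    show "y^2 > 0" using y0 by simp
    show "(x0, y) \<in> ?R" by (rule x0)
    show "(x' + M, y) \<in> ?R \<and> (x' - M, y) \<in> ?R" if "(x', y) \<in> ?R" "x'^2 + y^2 \<noteq> M^2" for x'
      using hmove[OF that(1) y0 that(2) ZM(1) M] .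
    show "(x' + (M+1), y) \<in> ?R \<and> (x' - (M+1), y) \<in> ?R" if "(x', y) \<in> ?R" "x'^2 + y^2 \<noteq> (M+1)^2" for x'
      using hmove[OF that(1) y0 that(2) ZM(2)] M by simp
  qed
  have col: "(x, y) \<in> ?R" if x0: "x \<noteq> 0" and y0: "(x, y0) \<in> ?R" for x y y0
  proof (rule row_lemma[where Q = "\<lambda>y. (x, y) \<in> ?R" and m = K and c = "x^2"])
    show "K > 0" by (rule K)
    show "x^2 > 0" using x0 by simp
    show "(x, y0) \<in> ?R" by (rule y0)
    show "(x, y' + K) \<in> ?R \<and> (x, y' - K) \<in> ?R" if "(x, y') \<in> ?R" "y'^2 + x^2 \<noteq> K^2" for y'
      using vmove[OF that(1) x0 that(2) ZM(3) K] .
    show "(x, y' + (K+1)) \<in> ?R \<and> (x, y' - (K+1)) \<in> ?R" if "(x, y') \<in> ?R" "y'^2 + x^2 \<noteq> (K+1)^2" for y'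
      using vmove[OF that(1) x0 that(2) ZM(4)] K by simp
  qed
  have MK0: "(M, 0) + (0, K) \<in> Zset Zs (Suc 0)"
  proof -
    have "K^2 \<noteq> M^2" using M K MK by (auto simp: power2_eq_iff)
    then show ?thesis
      apply (simp only: Zset.simps(2))
      apply (rule CollectI)
      apply (rule exI[of _ "(M,0)"], rule exI[of _ "(0,K)"])
      using ZM M K by (simp add: perpdot_def nsq_def Zzero_iff zero_prod_def)
  qed
  then have "(M, K) \<in> ?R" unfolding Zinf_def by (intro UN_I[of 1]) auto
  then have rowK: "(x, K) \<in> ?R" for x using row[of K M x] K \<open>(M, K) \<in> ?R\<close> by simp
  have colx: "(x, y) \<in> ?R" if "x \<noteq> 0" for x y using col[OF that rowK] .
  obtain x y where pxy: "p = (x, y)" by fastforce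
  show ?thesis
  proof (cases "y = 0")
    case True then have "x \<noteq> 0" using p pxy by (simp add: zero_prod_def)
    then show ?thesis using pxy colx by auto
  next
    case False then show ?thesis using pxy row[OF False colx[of 1]] by auto
  qed
qed



lemma kdot_add: "kdot (k + l) x = kdot k x + kdot l x"
  by (simp add: kdot_def algebra_simps)
lemma kdot_diff: "kdot (k - l) x = kdot k x - kdot l x"
  by (simp add: kdot_def algebra_simps)
lemma kdot_minus: "kdot (- k) x = - kdot k x"
  by (simp add: kdot_def algebra_simps)
lemma kdot_zero: "kdot 0 x = 0"
  by (simp add: kdot_def)

inductive trig :: "(real \<times> real \<Rightarrow> real) \<Rightarrow> bool" where
  tcos: "trig (\<lambda>x. cos (kdot k x))"
| tsin: "trig (\<lambda>x. sin (kdot k x))"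
| tadd: "trig f \<Longrightarrow> trig g \<Longrightarrow> trig (\<lambda>x. f x + g x)"
| tscale: "trig f \<Longrightarrow> trig (\<lambda>x. c * f x)"

lemma trig_const: "trig (\<lambda>x. c)"
proof -
  have "trig (\<lambda>x. c * cos (kdot 0 x))" by (intro tscale tcos)
  then show ?thesis by (simp add: kdot_zero)
qed

definition bas :: "(real \<times> real \<Rightarrow> real) \<Rightarrow> bool" where
  "bas f \<longleftrightarrow> (\<exists>k. f = (\<lambda>x. cos (kdot k x))) \<or> (\<exists>k. f = (\<lambda>x. sin (kdot k x)))"

lemma trig_bas_mult:
  assumes "bas f" "bas g" shows "trig (\<lambda>x. f x * g x)"
proof -
  have cc: "trig (\<lambda>x. cos (kdot k x) * cos (kdot l x))" for k l
  proof -
    have "trig (\<lambda>x. (1/2) * cos (kdot (k - l) x) + (1/2) * cos (kdot (k + l) x))"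
      by (intro tadd tscale tcos)
    moreover have "(\<lambda>x. (1/2) * cos (kdot (k - l) x) + (1/2) * cos (kdot (k + l) x))
        = (\<lambda>x. cos (kdot k x) * cos (kdot l x))"
      by (simp add: fun_eq_iff kdot_add kdot_diff cos_add cos_diff algebra_simps)
    ultimately show ?thesis by simp
  qed
  have ss: "trig (\<lambda>x. sin (kdot k x) * sin (kdot l x))" for k l
  proof -
    have "trig (\<lambda>x. (1/2) * cos (kdot (k - l) x) + (-1/2) * cos (kdot (k + l) x))"
      by (intro tadd tscale tcos)
    moreover have "(\<lambda>x. (1/2) * cos (kdot (k - l) x) + (-1/2) * cos (kdot (k + l) x))
        = (\<lambda>x. sin (kdot k x) * sin (kdot l x))"
      by (simp add: fun_eq_iff kdot_add kdot_diff cos_add cos_diff algebra_simps)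
    ultimately show ?thesis by simp
  qed
  have sc: "trig (\<lambda>x. sin (kdot k x) * cos (kdot l x))" for k l
  proof -
    have "trig (\<lambda>x. (1/2) * sin (kdot (k - l) x) + (1/2) * sin (kdot (k + l) x))"
      by (intro tadd tscale tsin)
    moreover have "(\<lambda>x. (1/2) * sin (kdot (k - l) x) + (1/2) * sin (kdot (k + l) x))
        = (\<lambda>x. sin (kdot k x) * cos (kdot l x))"
      by (simp add: fun_eq_iff kdot_add kdot_diff sin_add sin_diff algebra_simps)
    ultimately show ?thesis by simp
  qed
  have cs: "trig (\<lambda>x. cos (kdot k x) * sin (kdot l x))" for k l
    using sc[of l k] by (simp add: mult.commute)
  show ?thesis using assms cc ss sc cs unfolding bas_def by auto
qed

lemma trig_bas_mult2:
  assumes "bas f" "trig g" shows "trig (\<lambda>x. f x * g x)"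
  using assms(2)
proof induction
  case (tcos k) then show ?case by (rule trig_bas_mult[OF assms(1)]) (unfold bas_def, blast)
next
  case (tsin k) then show ?case by (rule trig_bas_mult[OF assms(1)]) (unfold bas_def, blast)
next
  case (tadd g1 g2)
  have "trig (\<lambda>x. f x * g1 x + f x * g2 x)" using tadd by (intro trig.tadd)
  then show ?case by (simp add: distrib_left)
next
  case (tscale g c)
  have "trig (\<lambda>x. c * (f x * g x))" using tscale by (intro trig.tscale)
  then show ?case by (simp add: algebra_simps)
qed

lemma trig_mult:
  assumes "trig f" "trig g" shows "trig (\<lambda>x. f x * g x)"
  using assms(1)
proof induction
  case (tcos k) then show ?case by (rule trig_bas_mult2[OF _ assms(2)]) (unfold bas_def, blast)
next
  case (tsin k) then show ?case by (rule trig_bas_mult2[OF _ assms(2)]) (unfold bas_def, blast)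
next
  case (tadd f1 f2)
  have "trig (\<lambda>x. f1 x * g x + f2 x * g x)" using tadd by (intro trig.tadd)
  then show ?case by (simp add: distrib_right)
next
  case (tscale f c)
  have "trig (\<lambda>x. c * (f x * g x))" using tscale by (intro trig.tscale)
  then show ?case by (simp add: algebra_simps)
qed

lemma trig_continuous: "trig f \<Longrightarrow> continuous_on UNIV f"
  by (induction rule: trig.induct) (auto simp: kdot_def intro!: continuous_intros)

lemma Zplus_neg: "k \<in> Zplus \<Longrightarrow> - k \<notin> Zplus"
  by (cases k) (auto simp: Zplus_def)

lemma Zplus_neg2: "k \<noteq> 0 \<Longrightarrow> k \<notin> Zplus \<Longrightarrow> - k \<in> Zplus"
  by (cases k) (auto simp: Zplus_def zero_prod_def)

lemma Zzero_iff': "p \<in> Zzero \<longleftrightarrow> p \<noteq> 0"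
proof (cases p)
  case (Pair a b)
  have img: "q \<in> uminus ` A \<longleftrightarrow> - q \<in> A" for q :: "int \<times> int" and A
    by (metis image_iff minus_minus)
  show ?thesis
    unfolding Zzero_def Zminus_def Pair
    by (auto simp: img Zplus_def zero_prod_def)
qed

definition ecomb :: "(real \<times> real \<Rightarrow> real) \<Rightarrow> bool" where
  "ecomb f \<longleftrightarrow> (\<exists>c0 F c. finite F \<and> F \<subseteq> Zzero \<and> (\<forall>x. f x = c0 + (\<Sum>k\<in>F. c k * ebasis k x)))"

lemma ecomb_single: "k \<noteq> 0 \<Longrightarrow> (\<forall>x. f x = a * ebasis k x) \<Longrightarrow> ecomb f"
  unfolding ecomb_def
  by (rule exI[of _ 0], rule exI[of _ "{k}"], rule exI[of _ "\<lambda>_. a"]) (auto simp: Zzero_iff')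

lemma ecomb_const: "(\<forall>x. f x = c) \<Longrightarrow> ecomb f"
  unfolding ecomb_def
  by (rule exI[of _ c], rule exI[of _ "{}"]) auto

lemma ecomb_add: assumes "ecomb f" "ecomb g" shows "ecomb (\<lambda>x. f x + g x)"
proof -
  obtain c0 F c where F: "finite F" "F \<subseteq> Zzero" "\<forall>x. f x = c0 + (\<Sum>k\<in>F. c k * ebasis k x)"
    using assms(1) unfolding ecomb_def by blast
  obtain d0 G d where G: "finite G" "G \<subseteq> Zzero" "\<forall>x. g x = d0 + (\<Sum>k\<in>G. d k * ebasis k x)"
    using assms(2) unfolding ecomb_def by blast
  define e where "e k = (if k \<in> F then c k else 0) + (if k \<in> G then d k else 0)" for k
  have "(\<Sum>k\<in>F \<union> G. e k * ebasis k x) = (\<Sum>k\<in>F. c k * ebasis k x) + (\<Sum>k\<in>G. d k * ebasis k x)" for x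
  proof -
    have "(\<Sum>k\<in>F \<union> G. e k * ebasis k x) = (\<Sum>k\<in>F \<union> G. (if k \<in> F then c k else 0) * ebasis k x)
       + (\<Sum>k\<in>F \<union> G. (if k \<in> G then d k else 0) * ebasis k x)"
      unfolding e_def by (simp add: distrib_right sum.distrib)
    also have "(\<Sum>k\<in>F \<union> G. (if k \<in> F then c k else 0) * ebasis k x) = (\<Sum>k\<in>F. c k * ebasis k x)"
      by (rule sum.mono_neutral_cong_right) (use F G in auto)
    also have "(\<Sum>k\<in>F \<union> G. (if k \<in> G then d k else 0) * ebasis k x) = (\<Sum>k\<in>G. d k * ebasis k x)"
      by (rule sum.mono_neutral_cong_right) (use F G in auto)
    finally show ?thesis .
  qed
  then show ?thesis unfolding ecomb_def using F G
    by (intro exI[of _ "c0 + d0"] exI[of _ "F \<union> G"] exI[of _ e]) auto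
qed

lemma ecomb_scale: assumes "ecomb f" shows "ecomb (\<lambda>x. a * f x)"
proof -
  obtain c0 F c where F: "finite F" "F \<subseteq> Zzero" "\<forall>x. f x = c0 + (\<Sum>k\<in>F. c k * ebasis k x)"
    using assms(1) unfolding ecomb_def by blast
  then show ?thesis unfolding ecomb_def
    by (intro exI[of _ "a * c0"] exI[of _ F] exI[of _ "\<lambda>k. a * c k"])
       (auto simp: distrib_left sum_distrib_left mult.assoc)
qed

lemma trig_ecomb: "trig f \<Longrightarrow> ecomb f"
proof (induction rule: trig.induct)
  case (tcos k)
  show ?case
  proof (cases "k = 0")
    case True then show ?thesis by (intro ecomb_const) (simp add: kdot_zero)
  next
    case False
    show ?thesis
    proof (cases "k \<in> Zplus")
      case True
      have "- k \<notin> Zplus" using Zplus_neg[OF True] .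
      then have "\<forall>x. cos (kdot k x) = 1 * ebasis (- k) x"
        by (simp add: ebasis_def kdot_minus)
      then show ?thesis using False by (intro ecomb_single[of "-k"]) auto
    next
      case nk: False
      then have "\<forall>x. cos (kdot k x) = 1 * ebasis k x" by (simp add: ebasis_def)
      then show ?thesis using False by (intro ecomb_single[of k]) auto
    qed
  qed
next
  case (tsin k)
  show ?case
  proof (cases "k = 0")
    case True then show ?thesis by (intro ecomb_const) (simp add: kdot_zero)
  next
    case False
    show ?thesis
    proof (cases "k \<in> Zplus")
      case True
      then have "\<forall>x. sin (kdot k x) = 1 * ebasis k x" by (simp add: ebasis_def)
      then show ?thesis using False by (intro ecomb_single[of k]) auto
    next
      case nk: False
      have "- k \<in> Zplus" using Zplus_neg2[OF False nk] .
      then have "\<forall>x. sin (kdot k x) = (-1) * ebasis (- k) x"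
        by (simp add: ebasis_def kdot_minus)
      then show ?thesis using False by (intro ecomb_single[of "-k" _ "-1"]) auto
    qed
  qed
next
  case (tadd f g) show ?case using ecomb_add[OF tadd.IH] .
next
  case (tscale f c) show ?case using ecomb_scale[OF tscale.IH] .
qed

lemma trig_proj:
  "trig (\<lambda>x. cos (fst x))" "trig (\<lambda>x. sin (fst x))" "trig (\<lambda>x. cos (snd x))" "trig (\<lambda>x. sin (snd x))"
proof -
  have a: "kdot (1, 0) x = fst x" "kdot (0, 1) x = snd x" for x by (simp_all add: kdot_def)
  show "trig (\<lambda>x. cos (fst x))" using tcos[of "(1,0)"] by (simp add: a)
  show "trig (\<lambda>x. sin (fst x))" using tsin[of "(1,0)"] by (simp add: a)
  show "trig (\<lambda>x. cos (snd x))" using tcos[of "(0,1)"] by (simp add: a)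
  show "trig (\<lambda>x. sin (snd x))" using tsin[of "(0,1)"] by (simp add: a)
qed



lemma Tbox_cbox: "Tbox = cbox (0,0) (2*pi, 2*pi)"
  by (simp add: Tbox_def cbox_Pair_eq)

lemma Tbox_lmeas: "Tbox \<in> lmeasurable" and Tbox_leb: "Tbox \<in> sets lebesgue"
  by (simp_all add: Tbox_cbox)

lemma Tbox_compact: "compact Tbox"
  by (simp add: Tbox_cbox)

lemma cont_integrable: fixes g :: "real \<times> real \<Rightarrow> real" assumes "continuous_on Tbox g" shows "integrable (lebesgue_on Tbox) g"
  using continuous_imp_integrable[of "(0,0)" "(2*pi,2*pi)" g] assms unfolding Tbox_cbox by simp

lemma cont_meas: fixes g :: "real \<times> real \<Rightarrow> real" shows "continuous_on Tbox g \<Longrightarrow> g \<in> borel_measurable (lebesgue_on Tbox)"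
  by (rule continuous_imp_measurable_on_sets_lebesgue[OF _ Tbox_leb])

lemma int1d:
  fixes c :: real and n :: int
  assumes n: "n \<noteq> 0" and g: "g = sin \<or> g = cos"
  shows "((\<lambda>y. g (c + of_int n * y)) has_integral 0) {0..2*pi}"
proof -
  have per: "cos (c + of_int n * (2*pi)) = cos c" "sin (c + of_int n * (2*pi)) = sin c"
  proof -
    have "cos (of_int n * (2*pi)) = 1" "sin (of_int n * (2*pi)) = 0"
      by (metis mult.commute cos_int_2pin, metis mult.commute sin_int_2pin)
    then show "cos (c + of_int n * (2*pi)) = cos c" "sin (c + of_int n * (2*pi)) = sin c"
      by (simp_all add: cos_add sin_add)
  qed
  from g show ?thesis
  proof
    assume gs: "g = sin"
    define F where "F y = - cos (c + of_int n * y) / n" for y :: real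
    have "((\<lambda>y. sin (c + of_int n * y)) has_integral (F (2*pi) - F 0)) {0..2*pi}"
    proof (rule fundamental_theorem_of_calculus)
      fix y :: real
      have "(F has_real_derivative sin (c + of_int n * y)) (at y within {0..2*pi})"
        unfolding F_def using n by (auto intro!: derivative_eq_intros simp: field_simps)
      then show "(F has_vector_derivative sin (c + of_int n * y)) (at y within {0..2*pi})"
        by (simp add: has_real_derivative_iff_has_vector_derivative)
    qed simp
    moreover have "F (2*pi) - F 0 = 0" unfolding F_def using per by simp
    ultimately show ?thesis using gs by simp
  next
    assume gc: "g = cos"
    define F where "F y = sin (c + of_int n * y) / n" for y :: real
    have "((\<lambda>y. cos (c + of_int n * y)) has_integral (F (2*pi) - F 0)) {0..2*pi}"
    proof (rule fundamental_theorem_of_calculus)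
      fix y :: real
      have "(F has_real_derivative cos (c + of_int n * y)) (at y within {0..2*pi})"
        unfolding F_def using n by (auto intro!: derivative_eq_intros simp: field_simps)
      then show "(F has_vector_derivative cos (c + of_int n * y)) (at y within {0..2*pi})"
        by (simp add: has_real_derivative_iff_has_vector_derivative)
    qed simp
    moreover have "F (2*pi) - F 0 = 0" unfolding F_def using per by simp
    ultimately show ?thesis using gc by simp
  qed
qed

lemma hk_zero:
  assumes k: "k \<noteq> 0" and g: "g = sin \<or> g = cos"
  shows "integral Tbox (\<lambda>x. g (kdot k x)) = 0"
proof -
  have contg: "continuous_on UNIV g" using g by (auto intro: continuous_intros)
  have cont: "continuous_on (cbox (0,0) (2*pi, 2*pi)) (\<lambda>x. g (kdot k x))"
    unfolding kdot_def
    by (rule continuous_on_compose2[OF contg]) (auto intro!: continuous_intros)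
  obtain a b where kab: "k = (a, b)" by fastforce
  have kd: "kdot k (x, y) = a * x + b * y" for x y :: real by (simp add: kdot_def kab)
  have "integral Tbox (\<lambda>x. g (kdot k x)) =
      integral (cbox 0 (2*pi)) (\<lambda>x. integral (cbox 0 (2*pi)) (\<lambda>y. g (kdot k (x, y))))"
    unfolding Tbox_cbox by (rule integral_prod_continuous[OF cont])
  also have "\<dots> = integral {0..2*pi} (\<lambda>x. integral {0..2*pi} (\<lambda>y. g (a * x + b * y)))"
    by (simp add: kdot_def kab)
  also have "\<dots> = 0"
  proof (cases "b = 0")
    case False
    have "integral {0..2*pi} (\<lambda>y. g (a * x + b * y)) = 0" for x :: real
      using int1d[OF False g, of "a * x"] by (rule integral_unique)
    then show ?thesis by simp
  next
    case True
    then have a: "a \<noteq> 0" using k kab by (simp add: zero_prod_def)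
    have eq: "(\<lambda>x::real. integral {0..2*pi} (\<lambda>y. g (a * x + b * y))) = (\<lambda>x::real. 2 * pi * g (0 + a * x))"
      using True by (simp add: content_real fun_eq_iff)
    have "((\<lambda>x::real. integral {0..2*pi} (\<lambda>y. g (a * x + b * y))) has_integral (2 * pi * 0)) {0..2*pi}"
      unfolding eq by (rule has_integral_mult_right[OF int1d[OF a g]])
    then show ?thesis by (metis integral_unique mult_zero_right)
  qed
  finally show ?thesis .
qed

lemma ebasis_cont: "continuous_on UNIV (ebasis k)"
proof (cases "k \<in> Zplus")
  case True
  then have "ebasis k = (\<lambda>x. sin (kdot k x))" by (simp add: ebasis_def fun_eq_iff)
  then show ?thesis unfolding kdot_def by (auto intro!: continuous_intros)
next
  case False
  then have "ebasis k = (\<lambda>x. cos (kdot k x))" by (simp add: ebasis_def fun_eq_iff)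
  then show ?thesis unfolding kdot_def by (auto intro!: continuous_intros)
qed

lemma ebasis_integrable: "integrable (lebesgue_on Tbox) (ebasis k)"
  by (rule cont_integrable) (rule continuous_on_subset[OF ebasis_cont], simp)

lemma ebasis_int_zero:
  assumes "k \<noteq> 0" shows "integral\<^sup>L (lebesgue_on Tbox) (ebasis k) = 0"
proof -
  have "integral\<^sup>L (lebesgue_on Tbox) (ebasis k) = integral Tbox (ebasis k)"
    by (rule lebesgue_integral_eq_integral[OF ebasis_integrable Tbox_leb])
  also have "\<dots> = 0"
  proof (cases "k \<in> Zplus")
    case True
    then have "ebasis k = (\<lambda>x. sin (kdot k x))" by (simp add: ebasis_def fun_eq_iff)
    then show ?thesis using hk_zero[OF assms, of sin] by simp
  next
    case False
    then have "ebasis k = (\<lambda>x. cos (kdot k x))" by (simp add: ebasis_def fun_eq_iff)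
    then show ?thesis using hk_zero[OF assms, of cos] by simp
  qed
  finally show ?thesis .
qed



lemma ang_eq:
  fixes a b :: real
  assumes a: "a \<in> {0..2*pi}" and b: "b \<in> {0..2*pi}" and c: "cos a = cos b" and s: "sin a = sin b"
  shows "a = b \<or> ((a = 0 \<or> a = 2*pi) \<and> (b = 0 \<or> b = 2*pi))"
proof -
  obtain n :: int where n: "a = b + 2 * pi * n" using sin_cos_eq_iff[of a b] c s by auto
  have ab: "0 \<le> a" "a \<le> 2*pi" "0 \<le> b" "b \<le> 2*pi" using a b by auto
  have "\<not> n \<ge> 2"
  proof
    assume "n \<ge> 2"
    then have "real_of_int n \<ge> 2" by simp
    then have "2 * pi * real_of_int n \<ge> 2 * pi * 2" by (intro mult_left_mono) (auto intro: less_imp_le pi_gt_zero)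
    then show False using ab n pi_gt_zero by linarith
  qed
  moreover have "\<not> n \<le> -2"
  proof
    assume "n \<le> -2"
    then have "real_of_int n \<le> -2" by simp
    then have "2 * pi * real_of_int n \<le> 2 * pi * (-2)" by (intro mult_left_mono) (auto intro: less_imp_le pi_gt_zero)
    then show False using ab n pi_gt_zero by linarith
  qed
  ultimately have "n = 0 \<or> n = 1 \<or> n = -1" by auto
  then show ?thesis using n a b by auto
qed

lemma SW_trig:
  fixes H :: "real \<times> real \<Rightarrow> real"
  assumes contH: "continuous_on Tbox H"
    and bd: "\<forall>x\<in>Tbox. (fst x = 0 \<or> fst x = 2*pi \<or> snd x = 0 \<or> snd x = 2*pi) \<longrightarrow> H x = 0"
    and e: "e > 0"
  shows "\<exists>t. trig t \<and> (\<forall>x\<in>Tbox. \<bar>H x - t x\<bar> < e)"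
proof -
  define \<phi> :: "real \<times> real \<Rightarrow> real \<times> real \<times> real \<times> real"
    where "\<phi> x = (cos (fst x), sin (fst x), cos (snd x), sin (snd x))" for x
  define S where "S = \<phi> ` Tbox"
  have cont\<phi>: "continuous_on Tbox \<phi>" unfolding \<phi>_def by (intro continuous_intros)
  have cS: "compact S" unfolding S_def by (rule compact_continuous_image[OF cont\<phi> Tbox_compact])
  have q: "quotient_map (top_of_set Tbox) (top_of_set S) \<phi>"
    unfolding quotient_map_def
  proof (intro conjI allI impI)
    show "\<phi> ` topspace (top_of_set Tbox) = topspace (top_of_set S)" by (simp add: S_def)
    fix U assume "U \<subseteq> topspace (top_of_set S)"
    then have U: "U \<subseteq> S" by simp
    have eq: "{x \<in> topspace (top_of_set Tbox). \<phi> x \<in> U} = Tbox \<inter> \<phi> -` U" by auto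
    show "openin (top_of_set Tbox) {x \<in> topspace (top_of_set Tbox). \<phi> x \<in> U} = openin (top_of_set S) U"
      unfolding eq using Abstract_Topology_2.continuous_imp_quotient_map[OF cont\<phi> S_def[symmetric] Tbox_compact U] .
  qed
  have hc: "continuous_map (top_of_set Tbox) euclideanreal H" using contH by simp
  have same: "H x = H y" if "x \<in> topspace (top_of_set Tbox)" "y \<in> topspace (top_of_set Tbox)" "\<phi> x = \<phi> y" for x y
  proof -
    have x: "x \<in> Tbox" "y \<in> Tbox" using that by auto
    obtain x1 x2 where xx: "x = (x1, x2)" by fastforce
    obtain y1 y2 where yy: "y = (y1, y2)" by fastforce
    have r: "x1 \<in> {0..2*pi}" "x2 \<in> {0..2*pi}" "y1 \<in> {0..2*pi}" "y2 \<in> {0..2*pi}"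
      using x xx yy by (auto simp: Tbox_def)
    have e1: "cos x1 = cos y1" "sin x1 = sin y1" "cos x2 = cos y2" "sin x2 = sin y2"
      using that(3) xx yy by (auto simp: \<phi>_def)
    have A: "x1 = y1 \<or> ((x1 = 0 \<or> x1 = 2*pi) \<and> (y1 = 0 \<or> y1 = 2*pi))"
      by (rule ang_eq[OF r(1) r(3) e1(1,2)])
    have B: "x2 = y2 \<or> ((x2 = 0 \<or> x2 = 2*pi) \<and> (y2 = 0 \<or> y2 = 2*pi))"
      by (rule ang_eq[OF r(2) r(4) e1(3,4)])
    have Hx: "H x = 0" if "x1 = 0 \<or> x1 = 2*pi \<or> x2 = 0 \<or> x2 = 2*pi"
      using bd x(1) that xx by auto
    have Hy: "H y = 0" if "y1 = 0 \<or> y1 = 2*pi \<or> y2 = 0 \<or> y2 = 2*pi"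
      using bd x(2) that yy by auto
    show ?thesis
    proof (cases "x1 = y1 \<and> x2 = y2")
      case True then show ?thesis using xx yy by simp
    next
      case False
      then have "(x1 = 0 \<or> x1 = 2*pi \<or> x2 = 0 \<or> x2 = 2*pi) \<and> (y1 = 0 \<or> y1 = 2*pi \<or> y2 = 0 \<or> y2 = 2*pi)"
        using A B by blast
      then show ?thesis using Hx Hy by simp
    qed
  qed
  obtain G where G1: "continuous_map (top_of_set S) euclideanreal G"
    and G3: "\<And>x. x \<in> topspace (top_of_set Tbox) \<Longrightarrow> G (\<phi> x) = H x"
  proof (rule quotient_map_lift_exists[OF q hc same])
    fix g assume "continuous_map (top_of_set S) euclideanreal g"
      "g ` topspace (top_of_set S) = H ` topspace (top_of_set Tbox)"
      "\<And>x. x \<in> topspace (top_of_set Tbox) \<Longrightarrow> g (\<phi> x) = H x"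
    then show thesis using that by blast
  qed
  have contG: "continuous_on S G" using G1 by simp
  define P where "P F \<longleftrightarrow> continuous_on S F \<and> trig (\<lambda>x. F (\<phi> x))" for F :: "real \<times> real \<times> real \<times> real \<Rightarrow> real"
  have "\<exists>g. P g \<and> (\<forall>u\<in>S. \<bar>G u - g u\<bar> < e)"
  proof (rule Stone_Weierstrass_HOL[OF cS _ _ _ _ _ contG e])
    show "P (\<lambda>x. c)" for c by (simp add: P_def trig_const)
    show "continuous_on S f" if "P f" for f using that P_def by simp
    show "P (\<lambda>x. f x + g x)" if "P f \<and> P g" for f g
      using that unfolding P_def by (auto intro: continuous_on_add tadd)
    show "P (\<lambda>x. f x * g x)" if "P f \<and> P g" for f g
      using that unfolding P_def by (auto intro: continuous_on_mult trig_mult)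
    show "\<exists>f. P f \<and> f x \<noteq> f y" if "x \<in> S \<and> y \<in> S \<and> x \<noteq> y" for x y
    proof -
      have p1: "P (\<lambda>u. fst u)" unfolding P_def \<phi>_def using trig_proj
        by (auto intro!: continuous_intros)
      have p2: "P (\<lambda>u. fst (snd u))" unfolding P_def \<phi>_def using trig_proj
        by (auto intro!: continuous_intros)
      have p3: "P (\<lambda>u. fst (snd (snd u)))" unfolding P_def \<phi>_def using trig_proj
        by (auto intro!: continuous_intros)
      have p4: "P (\<lambda>u. snd (snd (snd u)))" unfolding P_def \<phi>_def using trig_proj
        by (auto intro!: continuous_intros)
      have "fst x \<noteq> fst y \<or> fst (snd x) \<noteq> fst (snd y) \<or> fst (snd (snd x)) \<noteq> fst (snd (snd y))
          \<or> snd (snd (snd x)) \<noteq> snd (snd (snd y))"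
        using that by (auto simp: prod_eq_iff)
      then show ?thesis using p1 p2 p3 p4 by blast
    qed
  qed
  then obtain g where g: "P g" "\<forall>u\<in>S. \<bar>G u - g u\<bar> < e" by blast
  show ?thesis
  proof (intro exI[of _ "\<lambda>x. g (\<phi> x)"] conjI ballI)
    show "trig (\<lambda>x. g (\<phi> x))" using g(1) P_def by simp
    fix x assume x: "x \<in> Tbox"
    have "\<phi> x \<in> S" using x S_def by simp
    then have "\<bar>G (\<phi> x) - g (\<phi> x)\<bar> < e" using g(2) by blast
    then show "\<bar>H x - g (\<phi> x)\<bar> < e" using G3[of x] x by simp
  qed
qed



definition clip :: "real \<Rightarrow> real \<Rightarrow> real" where
  "clip B y = max (- B) (min B y)"

lemma clip_cont: "continuous_on UNIV (clip B)"
  unfolding clip_def by (intro continuous_intros)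

lemma clip_bound: "B \<ge> 0 \<Longrightarrow> \<bar>clip B y\<bar> \<le> B"
  by (simp add: clip_def)

lemma clip_id: "\<bar>y\<bar> \<le> B \<Longrightarrow> clip B y = y"
  by (simp add: clip_def)

lemma clip_diff: "B \<ge> 0 \<Longrightarrow> (y - clip B y)^2 \<le> y^2"
proof -
  assume "B \<ge> 0"
  then have "\<bar>y - clip B y\<bar> \<le> \<bar>y\<bar>" by (simp add: clip_def)
  then show ?thesis by (simp add: abs_le_square_iff)
qed

lemma meas_comp: "f \<in> borel_measurable M \<Longrightarrow> continuous_on UNIV (c :: real \<Rightarrow> real) \<Longrightarrow> (\<lambda>x. c (f x)) \<in> borel_measurable M"
  by (rule measurable_compose[OF _ borel_measurable_continuous_onI])

lemma AE_negl: assumes "negligible N" shows "AE x in lebesgue_on Tbox. x \<notin> N"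
proof -
  have "AE x in lebesgue. x \<notin> N" using assms by (intro AE_not_in) (simp add: negligible_iff_null_sets)
  then show ?thesis using Tbox_leb by (subst AE_restrict_space_iff) (auto elim: eventually_mono)
qed

lemma trunc_approx:
  assumes f: "L2 f" and e: "e > 0"
  shows "\<exists>N::nat. integrable (lebesgue_on Tbox) (\<lambda>x. (f x - clip N (f x))^2)
      \<and> integral\<^sup>L (lebesgue_on Tbox) (\<lambda>x. (f x - clip N (f x))^2) < e"
proof -
  let ?M = "lebesgue_on Tbox"
  have fm: "f \<in> borel_measurable ?M" and f2: "integrable ?M (\<lambda>x. (f x)^2)" using f by (auto simp: L2_def)
  have sm: "(\<lambda>x. (f x - clip (real n) (f x))^2) \<in> borel_measurable ?M" for n
    by (rule meas_comp[OF fm, of "\<lambda>y. (y - clip (real n) y)^2"]) (intro continuous_intros clip_cont)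
  have lim: "AE x in ?M. (\<lambda>n. (f x - clip (real n) (f x))^2) \<longlonglongrightarrow> 0"
  proof (rule AE_I2)
    fix x
    obtain m :: nat where m: "\<bar>f x\<bar> \<le> real m" using real_arch_simple by blast
    have "eventually (\<lambda>n. (f x - clip (real n) (f x))^2 = 0) sequentially"
    proof (rule eventually_sequentiallyI[of m])
      fix n assume "m \<le> n"
      then have "\<bar>f x\<bar> \<le> real n" using m by linarith
      then show "(f x - clip (real n) (f x))^2 = 0" by (simp add: clip_id)
    qed
    then show "(\<lambda>n. (f x - clip (real n) (f x))^2) \<longlonglongrightarrow> 0" by (rule tendsto_eventually)
  qed
  have bound: "AE x in ?M. norm ((f x - clip (real n) (f x))^2) \<le> (f x)^2" for n
    by (rule AE_I2) (simp add: clip_diff)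
  have conv: "(\<lambda>n. integral\<^sup>L ?M (\<lambda>x. (f x - clip (real n) (f x))^2)) \<longlonglongrightarrow> integral\<^sup>L ?M (\<lambda>x. 0)"
    by (rule integral_dominated_convergence[OF _ sm f2 lim bound]) simp
  have int: "integrable ?M (\<lambda>x. (f x - clip (real n) (f x))^2)" for n
    by (rule integrable_dominated_convergence2[OF _ sm f2 lim bound]) simp
  have "eventually (\<lambda>n. integral\<^sup>L ?M (\<lambda>x. (f x - clip (real n) (f x))^2) < e) sequentially"
    using order_tendstoD(2)[OF conv] e by simp
  then obtain n where "integral\<^sup>L ?M (\<lambda>x. (f x - clip (real n) (f x))^2) < e"
    by (auto simp: eventually_sequentially)
  then show ?thesis using int by blast
qed

definition bnd :: "real \<times> real \<Rightarrow> bool" where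
  "bnd x \<longleftrightarrow> fst x = 0 \<or> fst x = 2*pi \<or> snd x = 0 \<or> snd x = 2*pi"

lemma bnd_negligible: "negligible {x. bnd x}"
proof -
  have eq: "{x. bnd x} = {x. (1,0) \<bullet> x = (0::real)} \<union> {x. (1,0) \<bullet> x = 2*pi} \<union>
       {x. (0,1) \<bullet> x = (0::real)} \<union> {x. (0,1) \<bullet> x = 2*pi}"
    by (auto simp: bnd_def inner_prod_def)
  show ?thesis unfolding eq
    by (intro negligible_Un negligible_hyperplane) (auto simp: zero_prod_def)
qed

lemma cont_approx:
  fixes g :: "real \<times> real \<Rightarrow> real"
  assumes gm: "g \<in> borel_measurable (lebesgue_on Tbox)" and gb: "\<And>x. \<bar>g x\<bar> \<le> B" and e: "e > 0"
  shows "\<exists>H. continuous_on UNIV H \<and> (\<forall>x\<in>Tbox. bnd x \<longrightarrow> H x = 0)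
     \<and> integrable (lebesgue_on Tbox) (\<lambda>x. (g x - H x)^2)
     \<and> integral\<^sup>L (lebesgue_on Tbox) (\<lambda>x. (g x - H x)^2) < e"
proof -
  let ?M = "lebesgue_on Tbox"
  have B: "B \<ge> 0" using gb[of 0] by linarith
  have "g measurable_on Tbox" using measurable_on_iff_borel_measurable[OF Tbox_leb, of g] gm by simp
  then obtain N0 F where N0: "negligible N0" and F: "\<And>n. continuous_on UNIV (F n)"
    and Flim: "\<And>x. x \<notin> N0 \<Longrightarrow> (\<lambda>n. F n x) \<longlonglongrightarrow> (if x \<in> Tbox then g x else 0)"
    unfolding measurable_on_def by blast
  define d where "d x = min (min (fst x) (2*pi - fst x)) (min (snd x) (2*pi - snd x))" for x :: "real \<times> real"
  define \<psi> where "\<psi> n x = max 0 (min 1 (real n * d x))" for n :: nat and x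
  define Hn where "Hn n x = clip B (F n x) * \<psi> n x" for n x
  have dcont: "continuous_on UNIV d" unfolding d_def by (intro continuous_intros)
  have Hcont: "continuous_on UNIV (Hn n)" for n
    unfolding Hn_def \<psi>_def
    by (intro continuous_intros continuous_on_compose2[OF clip_cont F] continuous_on_compose2[OF dcont]) auto
  have Hbnd: "Hn n x = 0" if "x \<in> Tbox" "bnd x" for n x
  proof -
    have "d x = 0" using that unfolding d_def bnd_def Tbox_def by auto
    then show ?thesis by (simp add: Hn_def \<psi>_def)
  qed
  have Hb: "\<bar>Hn n x\<bar> \<le> B" for n x
  proof -
    have "0 \<le> \<psi> n x" "\<psi> n x \<le> 1" by (auto simp: \<psi>_def)
    then have "\<bar>clip B (F n x) * \<psi> n x\<bar> \<le> B * 1"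
      unfolding abs_mult using clip_bound[OF B] B by (intro mult_mono) auto
    then show ?thesis by (simp add: Hn_def)
  qed
  have sm: "(\<lambda>x. (g x - Hn n x)^2) \<in> borel_measurable ?M" for n
  proof -
    have "Hn n \<in> borel_measurable ?M"
      by (rule cont_meas) (rule continuous_on_subset[OF Hcont], simp)
    then show ?thesis using gm by measurable
  qed
  have wint: "integrable ?M (\<lambda>x. 4 * B^2)" by (rule cont_integrable) (intro continuous_intros)
  have bound: "AE x in ?M. norm ((g x - Hn n x)^2) \<le> 4 * B^2" for n
  proof (rule AE_I2)
    fix x
    have "\<bar>g x - Hn n x\<bar> \<le> \<bar>2 * B\<bar>" using gb[of x] Hb[of n x] B by linarith
    then have "(g x - Hn n x)^2 \<le> (2*B)^2" by (simp add: abs_le_square_iff)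
    then show "norm ((g x - Hn n x)^2) \<le> 4 * B^2" by (simp add: power_mult_distrib)
  qed
  have lim: "AE x in ?M. (\<lambda>n. (g x - Hn n x)^2) \<longlonglongrightarrow> 0"
  proof -
    have "AE x in ?M. x \<notin> N0 \<union> {x. bnd x}"
      by (rule AE_negl) (simp add: N0 bnd_negligible)
    moreover have "AE x in ?M. x \<in> Tbox" by (simp add: Tbox_leb AE_restrict_space_iff)
    ultimately show ?thesis
    proof eventually_elim
      case (elim x)
      then have x: "x \<notin> N0" "\<not> bnd x" "x \<in> Tbox" by auto
      have dpos: "d x > 0" using x unfolding d_def bnd_def Tbox_def by auto
      obtain m :: nat where m: "1 / d x \<le> real m" using real_arch_simple by blast
      have "eventually (\<lambda>n. \<psi> n x = 1) sequentially"
      proof (rule eventually_sequentiallyI[of m])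
        fix n assume "m \<le> n"
        then have "1 / d x \<le> real n" using m by linarith
        then have "1 \<le> real n * d x" using dpos by (simp add: field_simps)
        then show "\<psi> n x = 1" by (simp add: \<psi>_def)
      qed
      then have psil: "(\<lambda>n. \<psi> n x) \<longlonglongrightarrow> 1" by (rule tendsto_eventually)
      have Fl: "(\<lambda>n. F n x) \<longlonglongrightarrow> g x" using Flim[OF x(1)] x(3) by simp
      have "(\<lambda>n. clip B (F n x)) \<longlonglongrightarrow> clip B (g x)"
        unfolding clip_def by (intro tendsto_intros Fl)
      then have "(\<lambda>n. clip B (F n x)) \<longlonglongrightarrow> g x" using clip_id[OF gb[of x]] by simp
      then have "(\<lambda>n. Hn n x) \<longlonglongrightarrow> g x * 1" unfolding Hn_def by (intro tendsto_intros psil)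
      then have "(\<lambda>n. (g x - Hn n x)^2) \<longlonglongrightarrow> (g x - g x * 1)^2" by (intro tendsto_intros)
      then show ?case by simp
    qed
  qed
  have conv: "(\<lambda>n. integral\<^sup>L ?M (\<lambda>x. (g x - Hn n x)^2)) \<longlonglongrightarrow> integral\<^sup>L ?M (\<lambda>x. 0)"
    by (rule integral_dominated_convergence[OF _ sm wint lim bound]) simp
  have int: "integrable ?M (\<lambda>x. (g x - Hn n x)^2)" for n
    by (rule integrable_dominated_convergence2[OF _ sm wint lim bound]) simp
  have "eventually (\<lambda>n. integral\<^sup>L ?M (\<lambda>x. (g x - Hn n x)^2) < e) sequentially"
    using order_tendstoD(2)[OF conv] e by simp
  then obtain n where "integral\<^sup>L ?M (\<lambda>x. (g x - Hn n x)^2) < e"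
    by (auto simp: eventually_sequentially)
  then show ?thesis using int Hcont Hbnd by blast
qed



lemma sq3: "((a::real) + b + c)^2 \<le> 3 * (a^2 + b^2 + c^2)"
proof -
  have "3 * (a^2 + b^2 + c^2) - (a + b + c)^2 = (a - b)^2 + (b - c)^2 + (a - c)^2"
    by (simp add: power2_eq_square algebra_simps)
  moreover have "(a - b)^2 + (b - c)^2 + (a - c)^2 \<ge> 0" by simp
  ultimately show ?thesis by linarith
qed

lemma approx_trig:
  assumes f: "L2 f" and e: "e > 0"
  shows "\<exists>t. trig t \<and> integrable (lebesgue_on Tbox) (\<lambda>x. (f x - t x)^2)
     \<and> integral\<^sup>L (lebesgue_on Tbox) (\<lambda>x. (f x - t x)^2) < e"
proof -
  let ?M = "lebesgue_on Tbox"
  define A where "A = measure ?M Tbox"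
  have A0: "A \<ge> 0" by (simp add: A_def)
  have fm: "f \<in> borel_measurable ?M" using f by (simp add: L2_def)
  obtain N :: nat where N: "integrable ?M (\<lambda>x. (f x - clip N (f x))^2)"
      "integral\<^sup>L ?M (\<lambda>x. (f x - clip N (f x))^2) < e / 9"
    using trunc_approx[OF f, of "e/9"] e by auto
  define g where "g x = clip N (f x)" for x
  have gm: "g \<in> borel_measurable ?M" unfolding g_def by (rule meas_comp[OF fm clip_cont])
  have gb: "\<bar>g x\<bar> \<le> real N" for x unfolding g_def by (rule clip_bound) simp
  obtain H where H: "continuous_on UNIV H" "\<forall>x\<in>Tbox. bnd x \<longrightarrow> H x = 0"
      "integrable ?M (\<lambda>x. (g x - H x)^2)" "integral\<^sup>L ?M (\<lambda>x. (g x - H x)^2) < e / 9"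
    using cont_approx[OF gm gb, of "e/9"] e by auto
  define \<eta> where "\<eta> = min 1 (e / (9 * (A + 1)))"
  have \<eta>: "\<eta> > 0" "\<eta> \<le> 1" "\<eta> \<le> e / (9 * (A + 1))" using e A0 by (auto simp: \<eta>_def)
  have HT: "continuous_on Tbox H" by (rule continuous_on_subset[OF H(1)]) simp
  obtain t where t: "trig t" "\<forall>x\<in>Tbox. \<bar>H x - t x\<bar> < \<eta>"
    using SW_trig[OF HT _ \<eta>(1)] H(2) unfolding bnd_def by blast
  have tc: "continuous_on UNIV t" by (rule trig_continuous[OF t(1)])
  have tT: "continuous_on Tbox t" by (rule continuous_on_subset[OF tc]) simp
  have Htint: "integrable ?M (\<lambda>x. (H x - t x)^2)"
    by (rule cont_integrable) (intro continuous_intros HT tT)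
  have Ht_le: "integral\<^sup>L ?M (\<lambda>x. (H x - t x)^2) \<le> integral\<^sup>L ?M (\<lambda>x. \<eta>^2)"
  proof (rule integral_mono[OF Htint])
    show "integrable ?M (\<lambda>x. \<eta>^2)" by (rule cont_integrable) (intro continuous_intros)
    fix x assume "x \<in> space ?M"
    then have "\<bar>H x - t x\<bar> \<le> \<bar>\<eta>\<bar>" using t(2) \<eta>(1) by fastforce
    then show "(H x - t x)^2 \<le> \<eta>^2" by (simp add: abs_le_square_iff)
  qed
  have "integral\<^sup>L ?M (\<lambda>x. \<eta>^2) = \<eta>^2 * A" by (simp add: A_def)
  also have "\<dots> \<le> \<eta> * A" using \<eta> A0 by (intro mult_right_mono) (auto simp: power2_eq_square mult_le_cancel_left1)
  also have "\<dots> \<le> e / (9 * (A + 1)) * A" using \<eta> A0 by (intro mult_right_mono) auto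
  also have "\<dots> < e / 9"
  proof -
    have "e / (9 * (A + 1)) * A = (e / 9) * (A / (A + 1))" by (simp add: field_simps)
    also have "\<dots> < (e / 9) * 1" using e A0 by (intro mult_strict_left_mono) auto
    finally show ?thesis by simp
  qed
  finally have Ht: "integral\<^sup>L ?M (\<lambda>x. (H x - t x)^2) < e / 9" using Ht_le by linarith
  define w where "w x = 3 * ((f x - g x)^2 + (g x - H x)^2 + (H x - t x)^2)" for x
  have wint: "integrable ?M w" unfolding w_def g_def
    using N(1) H(3) Htint unfolding g_def by (intro Bochner_Integration.integrable_mult_right Bochner_Integration.integrable_add) auto
  have ptw: "(f x - t x)^2 \<le> w x" for x
    using sq3[of "f x - g x" "g x - H x" "H x - t x"] by (simp add: w_def)
  have tm: "t \<in> borel_measurable ?M" by (rule cont_meas[OF tT])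
  have ftm: "(\<lambda>x. (f x - t x)^2) \<in> borel_measurable ?M" using fm tm by measurable
  have ftint: "integrable ?M (\<lambda>x. (f x - t x)^2)"
    by (rule Bochner_Integration.integrable_bound[OF wint ftm]) (rule AE_I2, use ptw in \<open>auto simp: w_def\<close>)
  have "integral\<^sup>L ?M (\<lambda>x. (f x - t x)^2) \<le> integral\<^sup>L ?M w"
    by (rule integral_mono[OF ftint wint ptw])
  also have "integral\<^sup>L ?M w = 3 * (integral\<^sup>L ?M (\<lambda>x. (f x - g x)^2) + integral\<^sup>L ?M (\<lambda>x. (g x - H x)^2)
      + integral\<^sup>L ?M (\<lambda>x. (H x - t x)^2))"
    unfolding w_def using N(1) H(3) Htint unfolding g_def
    by (simp add: integral_add)
  also have "\<dots> < 3 * (e/9 + e/9 + e/9)"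
  proof -
    have s: "integral\<^sup>L ?M (\<lambda>x. (f x - g x)^2) + integral\<^sup>L ?M (\<lambda>x. (g x - H x)^2)
      + integral\<^sup>L ?M (\<lambda>x. (H x - t x)^2) < e/9 + e/9 + e/9"
      using N(2) H(4) Ht unfolding g_def by linarith
    show ?thesis unfolding g_def by (rule mult_strict_left_mono[OF s[unfolded g_def]]) simp
  qed
  finally show ?thesis using t(1) ftint by auto
qed

lemma L2_integrable:
  assumes "L2 f" shows "integrable (lebesgue_on Tbox) f"
proof -
  have fm: "f \<in> borel_measurable (lebesgue_on Tbox)" and f2: "integrable (lebesgue_on Tbox) (\<lambda>x. (f x)^2)"
    using assms by (auto simp: L2_def)
  have "integrable (lebesgue_on Tbox) (\<lambda>x. 1 + (f x)^2)"
    using f2 by (intro Bochner_Integration.integrable_add) (auto intro: cont_integrable continuous_intros)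
  then show ?thesis
  proof (rule Bochner_Integration.integrable_bound[OF _ fm], intro AE_I2)
    fix x
    have "\<bar>f x\<bar> \<le> 1 + (f x)^2"
    proof (cases "\<bar>f x\<bar> \<le> 1")
      case True then show ?thesis by (simp add: add_increasing2)
    next
      case False
      then have "\<bar>f x\<bar> * 1 \<le> \<bar>f x\<bar> * \<bar>f x\<bar>" by (intro mult_left_mono) auto
      then show ?thesis by (simp add: power2_eq_square)
    qed
    then show "norm (f x) \<le> norm (1 + (f x)^2)" by simp
  qed
qed

lemma L2_approx:
  assumes f: "L2 f" and e: "e > 0"
  shows "\<exists>F c. finite F \<and> F \<subseteq> Zzero \<and>
      integral\<^sup>L (lebesgue_on Tbox) (\<lambda>x. (f x - (\<Sum>k\<in>F. c k * ebasis k x))^2) < e"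
proof -
  let ?M = "lebesgue_on Tbox"
  define A where "A = measure ?M Tbox"
  have A0: "A \<ge> 0" by (simp add: A_def)
  obtain t where t: "trig t" "integrable ?M (\<lambda>x. (f x - t x)^2)" "integral\<^sup>L ?M (\<lambda>x. (f x - t x)^2) < e"
    using approx_trig[OF f e] by blast
  obtain c0 F c where F: "finite F" "F \<subseteq> Zzero" and tF: "\<And>x. t x = c0 + (\<Sum>k\<in>F. c k * ebasis k x)"
    using trig_ecomb[OF t(1)] unfolding ecomb_def by blast
  define h where "h x = (\<Sum>k\<in>F. c k * ebasis k x)" for x
  have fint: "integrable ?M f" by (rule L2_integrable[OF f])
  have f0: "integral\<^sup>L ?M f = 0" using f by (simp add: L2_def)
  have hint: "integrable ?M h" unfolding h_def
    by (intro Bochner_Integration.integrable_sum Bochner_Integration.integrable_mult_right ebasis_integrable)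
  have h0: "integral\<^sup>L ?M h = 0"
  proof -
    have "integral\<^sup>L ?M h = (\<Sum>k\<in>F. integral\<^sup>L ?M (\<lambda>x. c k * ebasis k x))"
      unfolding h_def by (rule Bochner_Integration.integral_sum) (intro Bochner_Integration.integrable_mult_right ebasis_integrable)
    also have "\<dots> = (\<Sum>k\<in>F. c k * integral\<^sup>L ?M (ebasis k))" by simp
    also have "\<dots> = 0"
    proof (rule sum.neutral, intro ballI)
      fix k assume "k \<in> F"
      then have "k \<in> Zzero" using F(2) by blast
      then have "k \<noteq> 0" by (simp add: Zzero_iff')
      then show "c k * integral\<^sup>L ?M (ebasis k) = 0" by (simp add: ebasis_int_zero)
    qed
    finally show ?thesis .
  qed
  have eqp: "(\<lambda>x. (f x - h x)^2) = (\<lambda>x. (f x - t x)^2 + (2 * c0) * (f x - h x) - c0^2)"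
    by (auto simp: fun_eq_iff tF h_def power2_eq_square algebra_simps)
  have "integral\<^sup>L ?M (\<lambda>x. (f x - h x)^2)
      = integral\<^sup>L ?M (\<lambda>x. (f x - t x)^2) + (2 * c0) * (integral\<^sup>L ?M f - integral\<^sup>L ?M h) - c0^2 * A"
  proof -
    have i1: "integrable ?M (\<lambda>x. (2 * c0) * (f x - h x))" using fint hint by auto
    have i2: "integrable ?M (\<lambda>x. c0^2)" by (rule cont_integrable) (intro continuous_intros)
    have "integral\<^sup>L ?M (\<lambda>x. (f x - t x)^2 + (2 * c0) * (f x - h x) - c0^2)
        = integral\<^sup>L ?M (\<lambda>x. (f x - t x)^2 + (2 * c0) * (f x - h x)) - integral\<^sup>L ?M (\<lambda>x. c0^2)"
      using t(2) i1 i2 by (intro Bochner_Integration.integral_diff) auto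
    also have "integral\<^sup>L ?M (\<lambda>x. (f x - t x)^2 + (2 * c0) * (f x - h x))
        = integral\<^sup>L ?M (\<lambda>x. (f x - t x)^2) + integral\<^sup>L ?M (\<lambda>x. (2 * c0) * (f x - h x))"
      using t(2) i1 by (intro Bochner_Integration.integral_add) auto
    also have "integral\<^sup>L ?M (\<lambda>x. (2 * c0) * (f x - h x)) = (2 * c0) * (integral\<^sup>L ?M f - integral\<^sup>L ?M h)"
      using fint hint by (simp add: integral_diff)
    also have "integral\<^sup>L ?M (\<lambda>x. c0^2) = c0^2 * A" by (simp add: A_def)
    finally show ?thesis unfolding eqp .
  qed
  also have "\<dots> \<le> integral\<^sup>L ?M (\<lambda>x. (f x - t x)^2)" using f0 h0 A0 by simp
  finally have "integral\<^sup>L ?M (\<lambda>x. (f x - h x)^2) < e" using t(3) by linarith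
  then show ?thesis using F unfolding h_def by blast
qed

theorem proposition3p3:
  fixes M K :: nat and Zs :: "(int \<times> int) set"
  assumes "finite Zs" and "Zs \<subseteq> Zzero"
    and "M > 2" and "K > 2" and "\<bar>int M - int K\<bar> > 2"
    and "{(int M + 1, 0), (int M, 0), (0, int K + 1), (0, int K)} \<subseteq> Zset Zs 0"
  shows "S_inf Zs = {f. L2 f}"
proof
  show "S_inf Zs \<subseteq> {f. L2 f}" by (auto simp: S_inf_def closed_span_def)
  have sub: "Zzero \<subseteq> Zinf Zs"
  proof
    fix p assume "p \<in> Zzero"
    then have "p \<noteq> 0" by (simp add: Zzero_iff)
    moreover have "int M > 0" "int K > 0" "int M \<noteq> int K" using assms(3-5) by auto
    ultimately show "p \<in> Zinf Zs" using all_in_Zinf[OF _ _ _ assms(6)] by blast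
  qed
  show "{f. L2 f} \<subseteq> S_inf Zs"
  proof
    fix f assume "f \<in> {f. L2 f}"
    then have f: "L2 f" by simp
    have "closed_span (Zinf Zs \<union> Zs) f"
      unfolding closed_span_def
    proof (intro conjI allI impI f)
      fix e :: real assume "e > 0"
      then obtain F c where "finite F" "F \<subseteq> Zzero"
        "integral\<^sup>L (lebesgue_on Tbox) (\<lambda>x. (f x - (\<Sum>k\<in>F. c k * ebasis k x))^2) < e"
        using L2_approx[OF f] by blast
      then show "\<exists>F c. finite F \<and> F \<subseteq> Zinf Zs \<union> Zs \<and>
          integral\<^sup>L (lebesgue_on Tbox) (\<lambda>x. (f x - (\<Sum>k\<in>F. c k * ebasis k x))^2) < e"
        using sub by blast
    qed
    then show "f \<in> S_inf Zs" by (simp add: S_inf_def)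
  qed
qed


end
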